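(* Let $M$ be a duplicial module in a pre-additive category. For all $n\ge0$, $$\kappa_n=1-b_{n+1}d_n-d_{n-1}b_n .$$
   Context: Let $\mathcal A$ be a pre-additive category. Let $\Lambda_+$ be the category with objects $[n]$, $n\ge0$, where $\Lambda_+([m],[n])$ is the set of weakly monotone $f:\mathbb Z\to\mathbb Z$ with $f(j+m+1)=f(j)+n+1$ for all $j$ and $f(0)\ge0$ (determined by values on $\{0,\dots,m\}$). Define $\varepsilon^n_i:[n-1]\to[n]$ ($n\ge1$, $0\le i\le n$) by $\varepsilon^n_i(j)=j$ for $0\le j<i$, $j+1$ for $i\le j\le n-1$, and $\eta^n_i:[n+1]\to[n]$ ($0\le i\le n+1$) by $\eta^n_i(j)=j$ for $0\le j\le i$, $j-1$ for $i<j\le n+1$. A duplicial module is a functor $M:\Lambda_+^{op}\to\mathcal A$; $M_n=M([n])$, $\partial_{n,i}=M(\varepsilon^n_i):M_n\to M_{n-1}$, $s_{n,i}=M(\eta^n_i):M_n\to M_{n+1}$. Convention $M_{-1}=0$, maps into/out of it zero. Define $b_n=\sum_{i=0}^n(-1)^i\partial_{n,i}$ ($b_0=0$), $d_n=\sum_{i=0}^{n+1}(-1)^is_{n,i}$ ($d_{-1}=0$), and the Karoubi operator $\kappa_n=(-1)^n(\partial_{n+1,0}s_{n,n+1}-s_{n-1,n}\partial_{n,0}):M_n\to M_n$ (so $\kappa_0=\partial_{1,0}s_{0,1}$). *)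

theory Defs
  imports Main
begin

(* A pre-additive category, given by hom-sets, composition, identities and
   an abelian group structure (add, zero, negation) on each hom-set,
   with composition bilinear. cmp g f = g o f. *)
record ('o,'m) preadd_cat =
  Hom :: "'o \<Rightarrow> 'o \<Rightarrow> 'm set"
  cmp :: "'m \<Rightarrow> 'm \<Rightarrow> 'm"
  idm :: "'o \<Rightarrow> 'm"
  add :: "'m \<Rightarrow> 'm \<Rightarrow> 'm"
  zer :: "'o \<Rightarrow> 'o \<Rightarrow> 'm"
  neg :: "'m \<Rightarrow> 'm"

definition preadditive :: "('o,'m) preadd_cat \<Rightarrow> bool" where
  "preadditive C \<longleftrightarrow>
    (\<forall>a b c f g. f \<in> Hom C a b \<longrightarrow> g \<in> Hom C b c \<longrightarrow> cmp C g f \<in> Hom C a c) \<and>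
    (\<forall>a b c d f g h. f \<in> Hom C a b \<longrightarrow> g \<in> Hom C b c \<longrightarrow> h \<in> Hom C c d \<longrightarrow>
        cmp C h (cmp C g f) = cmp C (cmp C h g) f) \<and>
    (\<forall>a. idm C a \<in> Hom C a a) \<and>
    (\<forall>a b f. f \<in> Hom C a b \<longrightarrow> cmp C f (idm C a) = f \<and> cmp C (idm C b) f = f) \<and>
    (\<forall>a b f g. f \<in> Hom C a b \<longrightarrow> g \<in> Hom C a b \<longrightarrow> add C f g \<in> Hom C a b) \<and>
    (\<forall>a b. zer C a b \<in> Hom C a b) \<and>
    (\<forall>a b f. f \<in> Hom C a b \<longrightarrow> neg C f \<in> Hom C a b) \<and>
    (\<forall>a b f g h. f \<in> Hom C a b \<longrightarrow> g \<in> Hom C a b \<longrightarrow> h \<in> Hom C a b \<longrightarrow>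
        add C (add C f g) h = add C f (add C g h)) \<and>
    (\<forall>a b f g. f \<in> Hom C a b \<longrightarrow> g \<in> Hom C a b \<longrightarrow> add C f g = add C g f) \<and>
    (\<forall>a b f. f \<in> Hom C a b \<longrightarrow> add C (zer C a b) f = f) \<and>
    (\<forall>a b f. f \<in> Hom C a b \<longrightarrow> add C (neg C f) f = zer C a b) \<and>
    (\<forall>a b c f1 f2 g. f1 \<in> Hom C a b \<longrightarrow> f2 \<in> Hom C a b \<longrightarrow> g \<in> Hom C b c \<longrightarrow>
        cmp C g (add C f1 f2) = add C (cmp C g f1) (cmp C g f2)) \<and>
    (\<forall>a b c f g1 g2. f \<in> Hom C a b \<longrightarrow> g1 \<in> Hom C b c \<longrightarrow> g2 \<in> Hom C b c \<longrightarrow>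
        cmp C (add C g1 g2) f = add C (cmp C g1 f) (cmp C g2 f))"

definition Lam :: "nat \<Rightarrow> nat \<Rightarrow> (int \<Rightarrow> int) set" where
  "Lam m n = {f. mono f \<and> (\<forall>j. f (j + int m + 1) = f j + int n + 1) \<and> f 0 \<ge> 0}"

(* epsilon^n_i : [n-1] -> [n], extended periodically (period n in, n+1 out) *)
definition eps :: "nat \<Rightarrow> nat \<Rightarrow> int \<Rightarrow> int" where
  "eps n i j = (let q = j div int n; r = j mod int n in
      (if r < int i then r else r + 1) + q * (int n + 1))"

(* eta^n_i : [n+1] -> [n], extended periodically (period n+2 in, n+1 out) *)
definition eta :: "nat \<Rightarrow> nat \<Rightarrow> int \<Rightarrow> int" where
  "eta n i j = (let q = j div (int n + 2); r = j mod (int n + 2) in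
      (if r \<le> int i then r else r - 1) + q * (int n + 1))"

(* A duplicial module: contravariant functor Lambda_+^op -> C.
   Mo n = M_n, Mf m n f = M(f) : M_n -> M_m for f in Lambda_+([m],[n]). *)
definition duplicial ::
  "('o,'m) preadd_cat \<Rightarrow> (nat \<Rightarrow> 'o) \<Rightarrow> (nat \<Rightarrow> nat \<Rightarrow> (int \<Rightarrow> int) \<Rightarrow> 'm) \<Rightarrow> bool" where
  "duplicial C Mo Mf \<longleftrightarrow>
    (\<forall>m n f. f \<in> Lam m n \<longrightarrow> Mf m n f \<in> Hom C (Mo n) (Mo m)) \<and>
    (\<forall>n. Mf n n id = idm C (Mo n)) \<and>
    (\<forall>l m n f g. f \<in> Lam l m \<longrightarrow> g \<in> Lam m n \<longrightarrow>
        Mf l n (g \<circ> f) = cmp C (Mf l m f) (Mf m n g))"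

fun altsum :: "('o,'m) preadd_cat \<Rightarrow> (nat \<Rightarrow> 'm) \<Rightarrow> nat \<Rightarrow> 'm" where
  "altsum C F 0 = F 0"
| "altsum C F (Suc k) = add C (altsum C F k)
      (if even (Suc k) then F (Suc k) else neg C (F (Suc k)))"

definition face :: "(nat \<Rightarrow> nat \<Rightarrow> (int \<Rightarrow> int) \<Rightarrow> 'm) \<Rightarrow> nat \<Rightarrow> nat \<Rightarrow> 'm" where
  "face Mf n i = Mf (n - 1) n (eps n i)"

definition degen :: "(nat \<Rightarrow> nat \<Rightarrow> (int \<Rightarrow> int) \<Rightarrow> 'm) \<Rightarrow> nat \<Rightarrow> nat \<Rightarrow> 'm" where
  "degen Mf n i = Mf (n + 1) n (eta n i)"

definition bop :: "('o,'m) preadd_cat \<Rightarrow> (nat \<Rightarrow> nat \<Rightarrow> (int \<Rightarrow> int) \<Rightarrow> 'm) \<Rightarrow> nat \<Rightarrow> 'm" where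
  "bop C Mf n = altsum C (face Mf n) n"

definition dop :: "('o,'m) preadd_cat \<Rightarrow> (nat \<Rightarrow> nat \<Rightarrow> (int \<Rightarrow> int) \<Rightarrow> 'm) \<Rightarrow> nat \<Rightarrow> 'm" where
  "dop C Mf n = altsum C (degen Mf n) (n + 1)"

(* Karoubi operator; for n = 0 the term s_{-1,0} partial_{0,0} is zero *)
definition kappa :: "('o,'m) preadd_cat \<Rightarrow> (nat \<Rightarrow> nat \<Rightarrow> (int \<Rightarrow> int) \<Rightarrow> 'm) \<Rightarrow> nat \<Rightarrow> 'm" where
  "kappa C Mf n =
    (let x = (if n = 0 then cmp C (face Mf 1 0) (degen Mf 0 1)
              else add C (cmp C (face Mf (n + 1) 0) (degen Mf n (n + 1)))
                         (neg C (cmp C (degen Mf (n - 1) n) (face Mf n 0))))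
     in if even n then x else neg C x)"

end

theory Submission imports "HOL-Algebra.Ring" Defs begin

lemma per_shift:
  fixes f :: "int \<Rightarrow> int"
  assumes "\<forall>j. f (j + P) = f j + Q"
  shows "f (j + q*P) = f j + q*Q"
proof (induction q rule: int_induct[of _ 0])
  case base then show ?case by simp
next
  case (step1 i)
  have "f (j + (i+1)*P) = f ((j + i*P) + P)" by (simp add: algebra_simps)
  also have "\<dots> = f (j + i*P) + Q" using assms by blast
  finally show ?case using step1 by (simp add: algebra_simps)
next
  case (step2 i)
  have "f (j + i*P) = f ((j + (i - 1)*P) + P)" by (simp add: algebra_simps)
  also have "\<dots> = f (j + (i - 1)*P) + Q" using assms by blast
  finally show ?case using step2 by (simp add: algebra_simps)
qed

lemma per_eq:
  fixes f g :: "int \<Rightarrow> int"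
  assumes "P > 0" "\<forall>j. f (j + P) = f j + Q" "\<forall>j. g (j + P) = g j + Q"
    and "\<And>k. 0 \<le> k \<Longrightarrow> k < P \<Longrightarrow> f k = g k"
  shows "f = g"
proof
  fix j
  have j: "j = j mod P + (j div P) * P" by simp
  have "f j = f (j mod P) + (j div P) * Q" using per_shift[OF assms(2)] j by metis
  also have "\<dots> = g (j mod P) + (j div P) * Q" using assms(1,4) by simp
  also have "\<dots> = g j" using per_shift[OF assms(3)] j by metis
  finally show "f j = g j" .
qed

lemma per_mono:
  fixes f :: "int \<Rightarrow> int"
  assumes "P > 0" "\<forall>j. f (j + P) = f j + Q"
    and "\<And>k. 0 \<le> k \<Longrightarrow> k < P \<Longrightarrow> f k \<le> f (k + 1)"
  shows "mono f"
proof -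
  have stp: "f j \<le> f (j + 1)" for j
  proof -
    have j: "j = j mod P + (j div P) * P" by simp
    have j1: "j + 1 = (j mod P + 1) + (j div P) * P" by simp
    have "f j = f (j mod P) + (j div P) * Q" using per_shift[OF assms(2)] j by metis
    moreover have "f (j+1) = f (j mod P + 1) + (j div P) * Q" using per_shift[OF assms(2)] j1 by metis
    moreover have "f (j mod P) \<le> f (j mod P + 1)" using assms(1,3) by simp
    ultimately show ?thesis by simp
  qed
  show ?thesis
  proof (rule monoI)
    fix x y :: int assume "x \<le> y"
    then show "f x \<le> f y"
    proof (induction y rule: int_ge_induct)
      case base then show ?case by simp
    next
      case (step i) then show ?case using stp[of i] by simp
    qed
  qed
qed

lemma Lam_comp: "f \<in> Lam l m \<Longrightarrow> g \<in> Lam m n \<Longrightarrow> g \<circ> f \<in> Lam l n"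
proof -
  assume a1: "f \<in> Lam l m" and a2: "g \<in> Lam m n"
  have a: "mono f" "\<forall>j. f (j + int l + 1) = f j + int m + 1" "0 \<le> f 0"
     "mono g" "\<forall>j. g (j + int m + 1) = g j + int n + 1" "0 \<le> g 0"
    using a1 a2 unfolding Lam_def by auto
  have "g 0 \<le> g (f 0)" using a(3,4) by (simp add: mono_def)
  then show ?thesis using a unfolding Lam_def by (simp add: mono_def) (meson order_trans)
qed

lemma id_Lam: "id \<in> Lam n n"
  unfolding Lam_def by (simp add: mono_def)

lemma eps_per: "n \<ge> 1 \<Longrightarrow> eps n i (j + int n) = eps n i j + int n + 1"
proof -
  assume "n \<ge> 1"
  then have "int n \<noteq> 0" by simp
  then show ?thesis unfolding eps_def Let_def by (simp add: div_add_self2 algebra_simps)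
qed

lemma eta_per: "eta n i (j + (int n + 2)) = eta n i j + int n + 1"
proof -
  have "int n + 2 \<noteq> 0" by simp
  then show ?thesis unfolding eta_def Let_def by (simp add: div_add_self2 algebra_simps)
qed

lemma eps_val: "n \<ge> 1 \<Longrightarrow> 0 \<le> k \<Longrightarrow> k \<le> int n \<Longrightarrow>
  eps n i k = (if k < int n then (if k < int i then k else k + 1)
               else if 0 < i then int n + 1 else int n + 2)"
proof -
  assume a: "n \<ge> 1" "0 \<le> k" "k \<le> int n"
  show ?thesis
  proof (cases "k < int n")
    case True then show ?thesis using a unfolding eps_def Let_def by simp
  next
    case False then have "k = 0 + int n" using a by simp
    then have "eps n i k = eps n i 0 + int n + 1" using eps_per[OF a(1)] by metis
    then show ?thesis using False a unfolding eps_def Let_def by auto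
  qed
qed

lemma eta_val: "0 \<le> k \<Longrightarrow> k \<le> int n + 1 \<Longrightarrow> eta n i k = (if k \<le> int i then k else k - 1)"
  unfolding eta_def Let_def by simp

lemma eps_Lam: "n \<ge> 1 \<Longrightarrow> i \<le> n \<Longrightarrow> eps n i \<in> Lam (n - 1) n"
  unfolding Lam_def
proof (intro CollectI conjI allI)
  assume a: "n \<ge> 1" "i \<le> n"
  have p: "int (n - 1) + 1 = int n" using a by simp
  show "eps n i (j + int (n - 1) + 1) = eps n i j + int n + 1" for j
    using eps_per[OF a(1)] p by (simp add: add.assoc)
  show "0 \<le> eps n i 0" using eps_val[OF a(1), of 0] by simp
  show "mono (eps n i)"
    apply (rule per_mono[where P="int n" and Q="int n + 1"])
    using a eps_per[OF a(1)] eps_val[OF a(1)] by auto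
qed

lemma eta_Lam: "i \<le> n + 1 \<Longrightarrow> eta n i \<in> Lam (n + 1) n"
  unfolding Lam_def
proof (intro CollectI conjI allI)
  assume a: "i \<le> n + 1"
  show "eta n i (j + int (n + 1) + 1) = eta n i j + int n + 1" for j
    using eta_per[of n i j] by (simp add: algebra_simps)
  show "0 \<le> eta n i 0" using eta_val[of 0] by simp
  show "mono (eta n i)"
  proof (rule per_mono[where P="int n + 2" and Q="int n + 1"])
    show "\<forall>j. eta n i (j + (int n + 2)) = eta n i j + (int n + 1)" using eta_per by (simp add: algebra_simps)
    have e: "eta n i (int n + 2) = int n + 1" using eta_per[of n i 0] eta_val[of 0 n i] by simp
    fix k :: int assume k: "0 \<le> k" "k < int n + 2"
    show "eta n i k \<le> eta n i (k + 1)"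
    proof (cases "k + 1 = int n + 2")
      case True
      then have "eta n i (k + 1) = int n + 1" using e by metis
      then show ?thesis using eta_val[of k n i] k by auto
    next
      case False then show ?thesis using eta_val[of k n i] eta_val[of "k+1" n i] k by auto
    qed
  qed simp
qed

lemma Lam_per: "f \<in> Lam m n \<Longrightarrow> \<forall>j. f (j + (int m + 1)) = f j + (int n + 1)"
  unfolding Lam_def by (simp add: add.assoc)

lemma Lam_eqI: "f \<in> Lam m n \<Longrightarrow> g \<in> Lam m n \<Longrightarrow> (\<And>k. 0 \<le> k \<Longrightarrow> k \<le> int m \<Longrightarrow> f k = g k) \<Longrightarrow> f = g"
  by (rule per_eq[where P="int m + 1" and Q="int n + 1"]) (auto dest: Lam_per)

lemma comp_id1: "i \<le> n + 1 \<Longrightarrow> eta n i \<circ> eps (n+1) i = id"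
proof (rule Lam_eqI[where m=n and n=n])
  assume a: "i \<le> n + 1"
  show "eta n i \<circ> eps (n + 1) i \<in> Lam n n"
    using Lam_comp[OF eps_Lam[of "n+1" i] eta_Lam[of i n]] a by simp
  show "id \<in> Lam n n" by (rule id_Lam)
  fix k :: int assume k: "0 \<le> k" "k \<le> int n"
  show "(eta n i \<circ> eps (n + 1) i) k = id k"
    using k eps_val[of "n+1" k i] eta_val[of _ n i] by auto
qed

lemma comp_id2: "j \<le> n \<Longrightarrow> eta n j \<circ> eps (n+1) (Suc j) = id"
proof (rule Lam_eqI[where m=n and n=n])
  assume a: "j \<le> n"
  show "eta n j \<circ> eps (n + 1) (Suc j) \<in> Lam n n"
    using Lam_comp[OF eps_Lam[of "n+1" "Suc j"] eta_Lam[of j n]] a by simp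
  show "id \<in> Lam n n" by (rule id_Lam)
  fix k :: int assume k: "0 \<le> k" "k \<le> int n"
  show "(eta n j \<circ> eps (n + 1) (Suc j)) k = id k"
    using k eps_val[of "n+1" k "Suc j"] eta_val[of _ n j] by auto
qed

lemma comp_c: "n \<ge> 1 \<Longrightarrow> i < j \<Longrightarrow> j \<le> n + 1 \<Longrightarrow> \<not> (i = 0 \<and> j = n + 1) \<Longrightarrow>
   eta n j \<circ> eps (n+1) i = eps n i \<circ> eta (n-1) (j-1)"
proof (rule Lam_eqI[where m=n and n=n])
  assume a: "n \<ge> 1" "i < j" "j \<le> n + 1" "\<not> (i = 0 \<and> j = n + 1)"
  show "eta n j \<circ> eps (n + 1) i \<in> Lam n n"
    using Lam_comp[OF eps_Lam[of "n+1" i] eta_Lam[of j n]] a by simp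
  show "eps n i \<circ> eta (n-1) (j-1) \<in> Lam n n"
    using Lam_comp[OF eta_Lam[of "j-1" "n-1"] eps_Lam[of n i]] a by simp
  fix k :: int assume k: "0 \<le> k" "k \<le> int n"
  have e1: "eta (n-1) (j-1) k = (if k \<le> int (j-1) then k else k - 1)"
    using eta_val[of k "n-1" "j-1"] k a by simp
  show "(eta n j \<circ> eps (n + 1) i) k = (eps n i \<circ> eta (n-1) (j-1)) k"
    using k a e1 eps_val[of "n+1" k i] eta_val[of _ n j] eps_val[of n _ i] by auto
qed

lemma comp_d: "j + 1 < i \<Longrightarrow> i \<le> n + 1 \<Longrightarrow>
   eta n j \<circ> eps (n+1) i = eps n (i-1) \<circ> eta (n-1) j"
proof (rule Lam_eqI[where m=n and n=n])
  assume a: "j + 1 < i" "i \<le> n + 1"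
  show "eta n j \<circ> eps (n + 1) i \<in> Lam n n"
    using Lam_comp[OF eps_Lam[of "n+1" i] eta_Lam[of j n]] a by simp
  show "eps n (i-1) \<circ> eta (n-1) j \<in> Lam n n"
    using Lam_comp[OF eta_Lam[of j "n-1"] eps_Lam[of n "i-1"]] a by simp
  fix k :: int assume k: "0 \<le> k" "k \<le> int n"
  have e1: "eta (n-1) j k = (if k \<le> int j then k else k - 1)"
    using eta_val[of k "n-1" j] k a by simp
  show "(eta n j \<circ> eps (n + 1) i) k = (eps n (i-1) \<circ> eta (n-1) j) k"
    using k a e1 eps_val[of "n+1" k i] eta_val[of _ n j] eps_val[of n _ "i-1"] by auto
qed

definition HG :: "('o,'m) preadd_cat \<Rightarrow> 'o \<Rightarrow> 'o \<Rightarrow> 'm ring" where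
 "HG C a b = \<lparr>carrier = Hom C a b, mult = (\<lambda>x y. x), one = zer C a b, zero = zer C a b, ring.add = add C\<rparr>"

lemma HG_simps[simp]: "carrier (HG C a b) = Hom C a b" "ring.add (HG C a b) = add C" "zero (HG C a b) = zer C a b"
  by (simp_all add: HG_def)

definition sgn_g :: "('a,'b) ring_scheme \<Rightarrow> nat \<Rightarrow> 'a \<Rightarrow> 'a" where
  "sgn_g G k x = (if even k then x else \<ominus>\<^bsub>G\<^esub> x)"

context abelian_group
begin

lemma sgn_closed: "x \<in> carrier G \<Longrightarrow> sgn_g G k x \<in> carrier G"
  by (simp add: sgn_g_def)

lemma sgn_add: "x \<in> carrier G \<Longrightarrow> sgn_g G (i + j) x = sgn_g G i (sgn_g G j x)"
  by (auto simp add: sgn_g_def minus_minus)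

lemma sgn_Suc: "x \<in> carrier G \<Longrightarrow> sgn_g G (Suc k) x = \<ominus> (sgn_g G k x)"
  by (auto simp add: sgn_g_def minus_minus)

lemma neg_finsum: "finite A \<Longrightarrow> f \<in> A \<rightarrow> carrier G \<Longrightarrow> \<ominus> (finsum G f A) = finsum G (\<lambda>a. \<ominus> (f a)) A"
proof (induction A rule: finite_induct)
  case empty then show ?case by simp
next
  case (insert a A)
  then have fa: "f a \<in> carrier G" and fA: "f \<in> A \<rightarrow> carrier G" by auto
  have "\<ominus> (finsum G f (insert a A)) = \<ominus> (f a \<oplus> finsum G f A)"
    using insert fa fA by (simp add: finsum_insert)
  also have "\<dots> = \<ominus> f a \<oplus> \<ominus> finsum G f A"
    using fa fA by (simp add: minus_add finsum_closed)
  also have "\<dots> = finsum G (\<lambda>a. \<ominus> (f a)) (insert a A)"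
    using insert fa fA by (simp add: finsum_insert Pi_def)
  finally show ?case .
qed

lemma sgn_finsum: "finite A \<Longrightarrow> f \<in> A \<rightarrow> carrier G \<Longrightarrow> sgn_g G k (finsum G f A) = finsum G (\<lambda>a. sgn_g G k (f a)) A"
  by (simp add: sgn_g_def neg_finsum)

lemma finsum_prod: "finite A \<Longrightarrow> finite B \<Longrightarrow> f \<in> A \<times> B \<rightarrow> carrier G \<Longrightarrow>
   finsum G (\<lambda>i. finsum G (\<lambda>j. f (i,j)) B) A = finsum G f (A \<times> B)"
proof (induction A rule: finite_induct)
  case empty then show ?case by simp
next
  case (insert a A)
  have fB: "(\<lambda>j. f (a,j)) \<in> B \<rightarrow> carrier G" using insert.prems by auto
  have fA: "f \<in> A \<times> B \<rightarrow> carrier G" using insert.prems by auto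
  have e: "insert a A \<times> B = Pair a ` B \<union> A \<times> B" by auto
  have d: "Pair a ` B \<inter> A \<times> B = {}" using insert.hyps by auto
  have "finsum G f (Pair a ` B) = finsum G (\<lambda>j. f (a,j)) B"
    using insert.prems by (subst finsum_reindex) (auto simp: inj_on_def)
  then have "finsum G f (insert a A \<times> B) = finsum G (\<lambda>j. f (a,j)) B \<oplus> finsum G f (A \<times> B)"
    unfolding e using insert.prems d insert.hyps by (subst finsum_Un_disjoint) auto
  moreover have "finsum G (\<lambda>i. finsum G (\<lambda>j. f (i,j)) B) (insert a A)
     = finsum G (\<lambda>j. f (a,j)) B \<oplus> finsum G (\<lambda>i. finsum G (\<lambda>j. f (i,j)) B) A"
    using insert fB fA by (subst finsum_insert) (auto intro!: finsum_closed)
  ultimately show ?case using insert fA by simp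
qed

lemma grp1: "x \<in> carrier G \<Longrightarrow> y \<in> carrier G \<Longrightarrow> x \<oplus> \<ominus> (x \<oplus> y) = \<ominus> y"
  by (simp add: minus_add a_ac r_neg1 r_neg2)

lemma grp2: "x \<in> carrier G \<Longrightarrow> a \<in> carrier G \<Longrightarrow> b \<in> carrier G \<Longrightarrow> s \<in> carrier G \<Longrightarrow>
  x \<oplus> \<ominus> ((x \<oplus> (\<ominus> a \<oplus> \<ominus> s)) \<oplus> (b \<oplus> s)) = a \<oplus> \<ominus> b"
proof -
  assume c: "x \<in> carrier G" "a \<in> carrier G" "b \<in> carrier G" "s \<in> carrier G"
  have "(x \<oplus> (\<ominus> a \<oplus> \<ominus> s)) \<oplus> (b \<oplus> s) = x \<oplus> (\<ominus> a \<oplus> b) \<oplus> (\<ominus> s \<oplus> s)"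
    using c by (simp add: a_ac)
  also have "\<dots> = x \<oplus> (\<ominus> a \<oplus> b)" using c by (simp add: l_neg)
  finally have e: "(x \<oplus> (\<ominus> a \<oplus> \<ominus> s)) \<oplus> (b \<oplus> s) = x \<oplus> (\<ominus> a \<oplus> b)" .
  have "x \<oplus> \<ominus> (x \<oplus> (\<ominus> a \<oplus> b)) = \<ominus> (\<ominus> a \<oplus> b)"
    using c grp1[of x "\<ominus> a \<oplus> b"] by simp
  also have "\<dots> = a \<oplus> \<ominus> b" using c by (simp add: minus_add minus_minus a_comm)
  finally show ?thesis unfolding e .
qed
lemma grp3: "x \<in> carrier G \<Longrightarrow> k \<in> carrier G \<Longrightarrow>
  x \<oplus> \<ominus> ((x \<oplus> (\<ominus> k \<oplus> \<ominus> \<zero>)) \<oplus> \<zero>) = k"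
  by (simp add: minus_add minus_minus a_ac r_neg l_neg)
lemma sgn_sub: "x \<in> carrier G \<Longrightarrow> y \<in> carrier G \<Longrightarrow>
  (if even k then x \<oplus> \<ominus> y else \<ominus> (x \<oplus> \<ominus> y)) = (if even k then x else \<ominus> x) \<oplus> \<ominus> (if even k then y else \<ominus> y)"
  by (simp add: minus_add minus_minus)

end

context
  fixes C :: "('o,'m) preadd_cat"
  assumes PA: "preadditive C"
begin

lemma cmp_closed: "f \<in> Hom C a b \<Longrightarrow> g \<in> Hom C b c \<Longrightarrow> cmp C g f \<in> Hom C a c"
  using PA[unfolded preadditive_def, THEN conjunct1] by blast
lemma add_closed: "f \<in> Hom C a b \<Longrightarrow> g \<in> Hom C a b \<Longrightarrow> add C f g \<in> Hom C a b"
  using PA[unfolded preadditive_def, THEN conjunct2,THEN conjunct2,THEN conjunct2,THEN conjunct2,THEN conjunct1] by blast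
lemma neg_closed: "f \<in> Hom C a b \<Longrightarrow> neg C f \<in> Hom C a b"
  using PA[unfolded preadditive_def, THEN conjunct2,THEN conjunct2,THEN conjunct2,THEN conjunct2,THEN conjunct2,THEN conjunct2,THEN conjunct1] by blast
lemma idm_closed: "idm C a \<in> Hom C a a"
  using PA[unfolded preadditive_def, THEN conjunct2, THEN conjunct2, THEN conjunct1] by blast
lemma zer_closed: "zer C a b \<in> Hom C a b"
  using PA[unfolded preadditive_def, THEN conjunct2,THEN conjunct2,THEN conjunct2,THEN conjunct2,THEN conjunct2,THEN conjunct1] by blast
lemma cmp_addR: "f1 \<in> Hom C a b \<Longrightarrow> f2 \<in> Hom C a b \<Longrightarrow> g \<in> Hom C b c \<Longrightarrow>
        cmp C g (add C f1 f2) = add C (cmp C g f1) (cmp C g f2)"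
  using PA[unfolded preadditive_def, THEN conjunct2,THEN conjunct2,THEN conjunct2,THEN conjunct2,THEN conjunct2,THEN conjunct2,THEN conjunct2,THEN conjunct2,THEN conjunct2,THEN conjunct2,THEN conjunct2,THEN conjunct1] by blast
lemma cmp_addL: "f \<in> Hom C a b \<Longrightarrow> g1 \<in> Hom C b c \<Longrightarrow> g2 \<in> Hom C b c \<Longrightarrow>
        cmp C (add C g1 g2) f = add C (cmp C g1 f) (cmp C g2 f)"
  using PA[unfolded preadditive_def, THEN conjunct2,THEN conjunct2,THEN conjunct2,THEN conjunct2,THEN conjunct2,THEN conjunct2,THEN conjunct2,THEN conjunct2,THEN conjunct2,THEN conjunct2,THEN conjunct2,THEN conjunct2] by blast

lemma add_assoc: "f \<in> Hom C a b \<Longrightarrow> g \<in> Hom C a b \<Longrightarrow> h \<in> Hom C a b \<Longrightarrow>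
        add C (add C f g) h = add C f (add C g h)"
  using PA[unfolded preadditive_def, THEN conjunct2,THEN conjunct2,THEN conjunct2,THEN conjunct2,THEN conjunct2,THEN conjunct2,THEN conjunct2,THEN conjunct1] by blast
lemma add_comm: "f \<in> Hom C a b \<Longrightarrow> g \<in> Hom C a b \<Longrightarrow> add C f g = add C g f"
  using PA[unfolded preadditive_def, THEN conjunct2,THEN conjunct2,THEN conjunct2,THEN conjunct2,THEN conjunct2,THEN conjunct2,THEN conjunct2,THEN conjunct2,THEN conjunct1] by blast
lemma zer_add: "f \<in> Hom C a b \<Longrightarrow> add C (zer C a b) f = f"
  using PA[unfolded preadditive_def, THEN conjunct2,THEN conjunct2,THEN conjunct2,THEN conjunct2,THEN conjunct2,THEN conjunct2,THEN conjunct2,THEN conjunct2,THEN conjunct2,THEN conjunct1] by blast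
lemma neg_add: "f \<in> Hom C a b \<Longrightarrow> add C (neg C f) f = zer C a b"
  using PA[unfolded preadditive_def, THEN conjunct2,THEN conjunct2,THEN conjunct2,THEN conjunct2,THEN conjunct2,THEN conjunct2,THEN conjunct2,THEN conjunct2,THEN conjunct2,THEN conjunct2,THEN conjunct1] by blast

lemma HG_ag: "abelian_group (HG C a b)"
proof (rule abelian_groupI)
  fix x assume "x \<in> carrier (HG C a b)"
  then show "\<exists>y\<in>carrier (HG C a b). y \<oplus>\<^bsub>HG C a b\<^esub> x = \<zero>\<^bsub>HG C a b\<^esub>"
    by (intro bexI[of _ "neg C x"]) (simp_all add: neg_add neg_closed)
qed (simp_all add: add_closed zer_closed add_assoc add_comm zer_add)

lemma HG_inv: "x \<in> Hom C a b \<Longrightarrow> a_inv (HG C a b) x = neg C x"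
proof -
  assume x: "x \<in> Hom C a b"
  interpret abelian_group "HG C a b" by (rule HG_ag)
  show ?thesis
    by (rule minus_equality) (simp_all add: x neg_add neg_closed)
qed

lemma cmp_zerR: "g \<in> Hom C b c \<Longrightarrow> cmp C g (zer C a b) = zer C a c"
proof -
  assume g: "g \<in> Hom C b c"
  interpret abelian_group "HG C a c" by (rule HG_ag)
  let ?z = "cmp C g (zer C a b)"
  have zc: "?z \<in> Hom C a c" using cmp_closed[OF zer_closed g] .
  have "add C (zer C a b) (zer C a b) = zer C a b" using zer_add zer_closed by blast
  then have "add C ?z ?z = ?z" using cmp_addR[OF zer_closed[of a b] zer_closed[of a b] g] by simp
  then show ?thesis using add.l_cancel_one[of ?z ?z] zc by simp
qed

lemma cmp_zerL: "f \<in> Hom C a b \<Longrightarrow> cmp C (zer C b c) f = zer C a c"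
proof -
  assume f: "f \<in> Hom C a b"
  interpret abelian_group "HG C a c" by (rule HG_ag)
  let ?z = "cmp C (zer C b c) f"
  have zc: "?z \<in> Hom C a c" using cmp_closed[OF f zer_closed] .
  have "add C (zer C b c) (zer C b c) = zer C b c" using zer_add zer_closed by blast
  then have "add C ?z ?z = ?z" using cmp_addL[OF f zer_closed[of b c] zer_closed[of b c]] by simp
  then show ?thesis using add.l_cancel_one[of ?z ?z] zc by simp
qed

lemma cmp_negR: "f \<in> Hom C a b \<Longrightarrow> g \<in> Hom C b c \<Longrightarrow> cmp C g (neg C f) = neg C (cmp C g f)"
proof -
  assume f: "f \<in> Hom C a b" and g: "g \<in> Hom C b c"
  interpret abelian_group "HG C a c" by (rule HG_ag)
  have "add C (neg C f) f = zer C a b" using neg_add f by blast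
  then have "add C (cmp C g (neg C f)) (cmp C g f) = zer C a c"
    using cmp_addR[OF neg_closed[OF f] f g] cmp_zerR[OF g] by simp
  then have "a_inv (HG C a c) (cmp C g f) = cmp C g (neg C f)"
    by (intro minus_equality) (auto intro: cmp_closed neg_closed f g)
  then show ?thesis using HG_inv cmp_closed f g by metis
qed

lemma cmp_negL: "f \<in> Hom C a b \<Longrightarrow> g \<in> Hom C b c \<Longrightarrow> cmp C (neg C g) f = neg C (cmp C g f)"
proof -
  assume f: "f \<in> Hom C a b" and g: "g \<in> Hom C b c"
  interpret abelian_group "HG C a c" by (rule HG_ag)
  have "add C (neg C g) g = zer C b c" using neg_add g by blast
  then have "add C (cmp C (neg C g) f) (cmp C g f) = zer C a c"
    using cmp_addL[OF f neg_closed[OF g] g] cmp_zerL[OF f] by simp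
  then have "a_inv (HG C a c) (cmp C g f) = cmp C (neg C g) f"
    by (intro minus_equality) (auto intro: cmp_closed neg_closed f g)
  then show ?thesis using HG_inv cmp_closed f g by metis
qed

lemma altsum_closed: "(\<And>i. i \<le> k \<Longrightarrow> F i \<in> Hom C a b) \<Longrightarrow> altsum C F k \<in> Hom C a b"
  by (induction k) (auto intro: add_closed neg_closed)

lemma altsum_cong: "(\<And>i. i \<le> k \<Longrightarrow> F i = G i) \<Longrightarrow> altsum C F k = altsum C G k"
  by (induction k) auto

lemma altsum_cmpL: "(\<And>i. i \<le> k \<Longrightarrow> F i \<in> Hom C b c) \<Longrightarrow> f \<in> Hom C a b \<Longrightarrow>
   cmp C (altsum C F k) f = altsum C (\<lambda>i. cmp C (F i) f) k"
proof (induction k)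
  case 0 then show ?case by simp
next
  case (Suc k)
  have c: "altsum C F k \<in> Hom C b c" using Suc.prems by (intro altsum_closed) auto
  have F: "F (Suc k) \<in> Hom C b c" using Suc.prems by auto
  show ?case
  proof (cases "even (Suc k)")
    case True
    then have "cmp C (altsum C F (Suc k)) f = add C (cmp C (altsum C F k) f) (cmp C (F (Suc k)) f)"
      using cmp_addL[OF Suc.prems(2) c F] by simp
    then show ?thesis using Suc True by simp
  next
    case False
    then have "cmp C (altsum C F (Suc k)) f = add C (cmp C (altsum C F k) f) (cmp C (neg C (F (Suc k))) f)"
      using cmp_addL[OF Suc.prems(2) c neg_closed[OF F]] by simp
    then show ?thesis using Suc False cmp_negL[OF Suc.prems(2) F] by simp
  qed
qed

lemma altsum_cmpR: "(\<And>i. i \<le> k \<Longrightarrow> F i \<in> Hom C a b) \<Longrightarrow> g \<in> Hom C b c \<Longrightarrow>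
   cmp C g (altsum C F k) = altsum C (\<lambda>i. cmp C g (F i)) k"
proof (induction k)
  case 0 then show ?case by simp
next
  case (Suc k)
  have c: "altsum C F k \<in> Hom C a b" using Suc.prems by (intro altsum_closed) auto
  have F: "F (Suc k) \<in> Hom C a b" using Suc.prems by auto
  show ?case
  proof (cases "even (Suc k)")
    case True
    then have "cmp C g (altsum C F (Suc k)) = add C (cmp C g (altsum C F k)) (cmp C g (F (Suc k)))"
      using cmp_addR[OF c F Suc.prems(2)] by simp
    then show ?thesis using Suc True by simp
  next
    case False
    then have "cmp C g (altsum C F (Suc k)) = add C (cmp C g (altsum C F k)) (cmp C g (neg C (F (Suc k))))"
      using cmp_addR[OF c neg_closed[OF F] Suc.prems(2)] by simp
    then show ?thesis using Suc False cmp_negR[OF F Suc.prems(2)] by simp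
  qed
qed


lemma sgn_closed_H: "x \<in> Hom C a b \<Longrightarrow> sgn_g (HG C a b) k x \<in> Hom C a b"
proof -
  assume x: "x \<in> Hom C a b"
  interpret abelian_group "HG C a b" by (rule HG_ag)
  show ?thesis using sgn_closed[of x k] x by simp
qed

lemma finsum_closed_H: "f \<in> A \<rightarrow> Hom C a b \<Longrightarrow> finsum (HG C a b) f A \<in> Hom C a b"
proof -
  assume x: "f \<in> A \<rightarrow> Hom C a b"
  interpret abelian_group "HG C a b" by (rule HG_ag)
  show ?thesis using finsum_closed[of f A] x by simp
qed

lemma altsum_finsum: "(\<And>i. i \<le> k \<Longrightarrow> F i \<in> Hom C a b) \<Longrightarrow>
  altsum C F k = finsum (HG C a b) (\<lambda>i. sgn_g (HG C a b) i (F i)) {..k}"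
proof (induction k)
  case 0
  interpret abelian_group "HG C a b" by (rule HG_ag)
  show ?case using 0 by (subst finsum_0) (auto simp: sgn_g_def)
next
  case (Suc k)
  interpret abelian_group "HG C a b" by (rule HG_ag)
  have F: "F (Suc k) \<in> Hom C a b" using Suc.prems by auto
  have c: "(\<lambda>i. sgn_g (HG C a b) i (F i)) \<in> {..Suc k} \<rightarrow> carrier (HG C a b)"
    using Suc.prems by (auto intro: sgn_closed_H)
  have "finsum (HG C a b) (\<lambda>i. sgn_g (HG C a b) i (F i)) {..Suc k}
     = sgn_g (HG C a b) (Suc k) (F (Suc k)) \<oplus>\<^bsub>HG C a b\<^esub> finsum (HG C a b) (\<lambda>i. sgn_g (HG C a b) i (F i)) {..k}"
    using c by (rule finsum_Suc)
  also have "\<dots> = finsum (HG C a b) (\<lambda>i. sgn_g (HG C a b) i (F i)) {..k} \<oplus>\<^bsub>HG C a b\<^esub> sgn_g (HG C a b) (Suc k) (F (Suc k))"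
    using c F Suc.prems by (intro a_comm) (auto intro!: sgn_closed_H finsum_closed_H)
  also have "\<dots> = altsum C F (Suc k)"
    using Suc F by (simp add: sgn_g_def HG_inv)
  finally show ?case by simp
qed

lemma altsum2: "(\<And>i j. i \<le> k \<Longrightarrow> j \<le> l \<Longrightarrow> P i j \<in> Hom C a b) \<Longrightarrow>
  altsum C (\<lambda>i. altsum C (\<lambda>j. P i j) l) k
   = finsum (HG C a b) (\<lambda>(i,j). sgn_g (HG C a b) (i+j) (P i j)) ({..k} \<times> {..l})"
proof -
  assume P: "\<And>i j. i \<le> k \<Longrightarrow> j \<le> l \<Longrightarrow> P i j \<in> Hom C a b"
  interpret abelian_group "HG C a b" by (rule HG_ag)
  have "altsum C (\<lambda>i. altsum C (\<lambda>j. P i j) l) k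
     = finsum (HG C a b) (\<lambda>i. sgn_g (HG C a b) i (altsum C (\<lambda>j. P i j) l)) {..k}"
    using P by (intro altsum_finsum altsum_closed) auto
  also have "\<dots> = finsum (HG C a b) (\<lambda>i. finsum (HG C a b) (\<lambda>j. (\<lambda>(i,j). sgn_g (HG C a b) (i+j) (P i j)) (i,j)) {..l}) {..k}"
  proof (rule finsum_cong')
    fix i assume i: "i \<in> {..k}"
    have "altsum C (\<lambda>j. P i j) l = finsum (HG C a b) (\<lambda>j. sgn_g (HG C a b) j (P i j)) {..l}"
      using P i by (intro altsum_finsum) auto
    moreover have "sgn_g (HG C a b) i (finsum (HG C a b) (\<lambda>j. sgn_g (HG C a b) j (P i j)) {..l})
       = finsum (HG C a b) (\<lambda>j. sgn_g (HG C a b) i (sgn_g (HG C a b) j (P i j))) {..l}"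
      using P i by (intro sgn_finsum) (auto intro: sgn_closed_H)
    moreover have "finsum (HG C a b) (\<lambda>j. sgn_g (HG C a b) i (sgn_g (HG C a b) j (P i j))) {..l}
       = finsum (HG C a b) (\<lambda>j. (\<lambda>(i,j). sgn_g (HG C a b) (i+j) (P i j)) (i,j)) {..l}"
      using P i by (intro finsum_cong') (auto intro: sgn_closed_H simp: sgn_add)
    ultimately show "sgn_g (HG C a b) i (altsum C (\<lambda>j. P i j) l)
       = finsum (HG C a b) (\<lambda>j. (\<lambda>(i,j). sgn_g (HG C a b) (i+j) (P i j)) (i,j)) {..l}"
      by simp
  qed (use P in \<open>auto intro!: finsum_closed_H sgn_closed_H\<close>)
  also have "\<dots> = finsum (HG C a b) (\<lambda>(i,j). sgn_g (HG C a b) (i+j) (P i j)) ({..k} \<times> {..l})"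
    using P by (intro finsum_prod) (auto intro: sgn_closed_H)
  finally show ?thesis .
qed

lemma cmp_altsum2: "(\<And>i. i \<le> k \<Longrightarrow> F i \<in> Hom C b c) \<Longrightarrow> (\<And>j. j \<le> l \<Longrightarrow> H j \<in> Hom C a b) \<Longrightarrow>
  cmp C (altsum C F k) (altsum C H l)
   = finsum (HG C a c) (\<lambda>(i,j). sgn_g (HG C a c) (i+j) (cmp C (F i) (H j))) ({..k} \<times> {..l})"
proof -
  assume F: "\<And>i. i \<le> k \<Longrightarrow> F i \<in> Hom C b c" and H: "\<And>j. j \<le> l \<Longrightarrow> H j \<in> Hom C a b"
  have "cmp C (altsum C F k) (altsum C H l) = altsum C (\<lambda>i. cmp C (F i) (altsum C H l)) k"
    using F H by (intro altsum_cmpL altsum_closed) auto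
  also have "\<dots> = altsum C (\<lambda>i. altsum C (\<lambda>j. cmp C (F i) (H j)) l) k"
    using F H by (intro altsum_cong altsum_cmpR) auto
  also have "\<dots> = finsum (HG C a c) (\<lambda>(i,j). sgn_g (HG C a c) (i+j) (cmp C (F i) (H j))) ({..k} \<times> {..l})"
    using F H by (intro altsum2 cmp_closed) auto
  finally show ?thesis .
qed

end


lemma Mf_hom: "duplicial C Mo Mf \<Longrightarrow> f \<in> Lam m k \<Longrightarrow> Mf m k f \<in> Hom C (Mo k) (Mo m)"
  unfolding duplicial_def by blast
lemma Mf_id: "duplicial C Mo Mf \<Longrightarrow> Mf k k id = idm C (Mo k)"
  unfolding duplicial_def by blast
lemma Mf_comp: "duplicial C Mo Mf \<Longrightarrow> f \<in> Lam l m \<Longrightarrow> g \<in> Lam m k \<Longrightarrow> Mf l k (g \<circ> f) = cmp C (Mf l m f) (Mf m k g)"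
  unfolding duplicial_def by blast

lemma face_hom: "duplicial C Mo Mf \<Longrightarrow> n \<ge> 1 \<Longrightarrow> i \<le> n \<Longrightarrow> face Mf n i \<in> Hom C (Mo n) (Mo (n - 1))"
  unfolding face_def by (intro Mf_hom eps_Lam)
lemma degen_hom: "duplicial C Mo Mf \<Longrightarrow> j \<le> n + 1 \<Longrightarrow> degen Mf n j \<in> Hom C (Mo n) (Mo (n + 1))"
  unfolding degen_def by (intro Mf_hom eta_Lam)
lemma FD: "duplicial C Mo Mf \<Longrightarrow> i \<le> n + 1 \<Longrightarrow> j \<le> n + 1 \<Longrightarrow>
   cmp C (face Mf (n+1) i) (degen Mf n j) = Mf n n (eta n j \<circ> eps (n+1) i)"
  unfolding face_def degen_def using Mf_comp[of C Mo Mf "eps (n+1) i" n "n+1" "eta n j" n] eps_Lam[of "n+1" i] eta_Lam[of j n]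
  by simp
lemma DF: "duplicial C Mo Mf \<Longrightarrow> n \<ge> 1 \<Longrightarrow> i \<le> n \<Longrightarrow> j \<le> n \<Longrightarrow>
   cmp C (degen Mf (n-1) j) (face Mf n i) = Mf n n (eps n i \<circ> eta (n-1) j)"
  unfolding face_def degen_def using Mf_comp[of C Mo Mf "eta (n-1) j" n "n-1" "eps n i" n] eps_Lam[of n i] eta_Lam[of j "n-1"]
  by simp

definition hh :: "nat \<times> nat \<Rightarrow> nat \<times> nat" where
  "hh = (\<lambda>(j,i). if i \<le> j then (i, Suc j) else (Suc i, j))"

lemma hh_inj: "inj_on hh A"
  unfolding hh_def inj_on_def by (auto split: if_splits)

lemma P_decomp: "{..n+1} \<times> {..n+1} = {(0,0)} \<union> ((\<lambda>j. (Suc j, Suc j)) ` {..n} \<union> ((\<lambda>j. (Suc j, j)) ` {..n}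
    \<union> ({(0, n+1)} \<union> hh ` ({..n} \<times> {..n} - {(n,0)}))))" (is "?L = ?R")
proof
  show "?R \<subseteq> ?L" unfolding hh_def by (auto split: if_splits)
  show "?L \<subseteq> ?R"
  proof
    fix p assume "p \<in> ?L"
    then obtain i j where p: "p = (i,j)" "i \<le> n+1" "j \<le> n+1" by auto
    consider "i = j" | "i = j + 1" | "i < j" | "i > j + 1" by linarith
    then show "p \<in> ?R"
    proof cases
      case 1
      show ?thesis
      proof (cases i)
        case 0 then show ?thesis using p 1 by simp
      next
        case (Suc k)
        then have "p \<in> (\<lambda>j. (Suc j, Suc j)) ` {..n}" using p 1 by (intro image_eqI[of _ _ k]) auto
        then show ?thesis by blast
      qed
    next
      case 2
      then have "p \<in> (\<lambda>j. (Suc j, j)) ` {..n}" using p by (intro image_eqI[of _ _ j]) auto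
      then show ?thesis by blast
    next
      case 3
      show ?thesis
      proof (cases "i = 0 \<and> j = n + 1")
        case True then show ?thesis using p by simp
      next
        case False
        then have "p \<in> hh ` ({..n} \<times> {..n} - {(n,0)})" using p 3
          by (intro image_eqI[of _ _ "(j - 1, i)"]) (auto simp: hh_def)
        then show ?thesis by blast
      qed
    next
      case 4
      then have "p \<in> hh ` ({..n} \<times> {..n} - {(n,0)})" using p
        by (intro image_eqI[of _ _ "(j, i - 1)"]) (auto simp: hh_def)
      then show ?thesis by blast
    qed
  qed
qed

lemma D1_eq: "(\<lambda>j. (Suc j, Suc j)) ` {..n} = {(a,b). a = b \<and> 1 \<le> a \<and> a \<le> n+1}"
proof
  show "{(a,b). a = b \<and> 1 \<le> a \<and> a \<le> n+1} \<subseteq> (\<lambda>j. (Suc j, Suc j)) ` {..n}"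
  proof
    fix p assume "p \<in> {(a,b). a = b \<and> 1 \<le> a \<and> a \<le> n+1}"
    then obtain a where "p = (a,a)" "1 \<le> a" "a \<le> n+1" by auto
    then show "p \<in> (\<lambda>j. (Suc j, Suc j)) ` {..n}" by (intro image_eqI[of _ _ "a - 1"]) auto
  qed
qed auto

lemma D2_eq: "(\<lambda>j. (Suc j, j)) ` {..n} = {(a,b). a = b + 1 \<and> b \<le> n}"
  by auto

lemma H_eq: "hh ` ({..n} \<times> {..n} - {(n,0)}) = {(a,b). (a < b \<and> b \<le> n+1 \<and> \<not> (a = 0 \<and> b = n+1)) \<or> (b + 1 < a \<and> a \<le> n+1)}"
  (is "?L = ?R")
proof
  show "?L \<subseteq> ?R" unfolding hh_def by (auto split: if_splits)
  show "?R \<subseteq> ?L"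
  proof
    fix p assume "p \<in> ?R"
    then obtain i j where p: "p = (i,j)" and c: "(i < j \<and> j \<le> n+1 \<and> \<not> (i = 0 \<and> j = n+1)) \<or> (j + 1 < i \<and> i \<le> n+1)" by auto
    show "p \<in> ?L"
    proof (cases "i < j")
      case True
      then show ?thesis using p c by (intro image_eqI[of _ _ "(j - 1, i)"]) (auto simp: hh_def)
    next
      case False
      then show ?thesis using p c by (intro image_eqI[of _ _ "(j, i - 1)"]) (auto simp: hh_def)
    qed
  qed
qed

definition Tt where
  "Tt C Mo Mf n = (\<lambda>(i,j). sgn_g (HG C (Mo n) (Mo n)) (i+j) (cmp C (face Mf (n+1) i) (degen Mf n j)))"
definition Ut where
  "Ut C Mo Mf n = (\<lambda>(j,i). sgn_g (HG C (Mo n) (Mo n)) (j+i) (cmp C (degen Mf (n-1) j) (face Mf n i)))"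

lemma bd_decomp:
  fixes n :: nat
  assumes PA: "preadditive C" and DU: "duplicial C Mo Mf"
  defines "G \<equiv> HG C (Mo n) (Mo n)"
  shows "cmp C (bop C Mf (n + 1)) (dop C Mf n)
     = idm C (Mo n) \<oplus>\<^bsub>G\<^esub> (Tt C Mo Mf n (0, n+1) \<oplus>\<^bsub>G\<^esub> \<ominus>\<^bsub>G\<^esub> finsum G (Ut C Mo Mf n) ({..n} \<times> {..n} - {(n,0)}))"
proof -
  interpret abelian_group G unfolding G_def by (rule HG_ag[OF PA])
  have cG: "carrier G = Hom C (Mo n) (Mo n)" by (simp add: G_def)
  let ?T = "Tt C Mo Mf n" and ?U = "Ut C Mo Mf n"
  let ?Q = "{..n} \<times> {..n} - {(n,0)}"
  have fh: "i \<le> Suc n \<Longrightarrow> face Mf (Suc n) i \<in> Hom C (Mo (Suc n)) (Mo n)" for i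
    using face_hom[OF DU, of "n+1" i] by simp
  have dh: "j \<le> Suc n \<Longrightarrow> degen Mf n j \<in> Hom C (Mo n) (Mo (Suc n))" for j
    using degen_hom[OF DU] by simp
  have bd: "cmp C (bop C Mf (n + 1)) (dop C Mf n) = finsum G ?T ({..n+1} \<times> {..n+1})"
    unfolding bop_def dop_def Tt_def G_def
    by (rule cmp_altsum2[OF PA]) (use fh dh in simp_all)
  have Tc: "p \<in> {..n+1} \<times> {..n+1} \<Longrightarrow> ?T p \<in> carrier G" for p
    unfolding Tt_def cG G_def by (auto intro!: sgn_closed_H[OF PA] cmp_closed[OF PA] fh dh)
  have idc: "idm C (Mo n) \<in> carrier G" using idm_closed[OF PA] cG by simp
  have T1: "j \<le> n \<Longrightarrow> ?T (Suc j, Suc j) = idm C (Mo n)" for j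
    unfolding Tt_def using FD[OF DU, of "Suc j" n "Suc j"] comp_id1[of "Suc j" n] Mf_id[OF DU]
    by (simp add: sgn_g_def)
  have T0: "?T (0, 0) = idm C (Mo n)"
    unfolding Tt_def using FD[OF DU, of 0 n 0] comp_id1[of 0 n] Mf_id[OF DU]
    by (simp add: sgn_g_def)
  have T2: "j \<le> n \<Longrightarrow> ?T (Suc j, j) = \<ominus>\<^bsub>G\<^esub> idm C (Mo n)" for j
    unfolding Tt_def using FD[OF DU, of "Suc j" n j] comp_id2[of j n] Mf_id[OF DU]
    by (simp add: sgn_g_def G_def)
  have Uc: "p \<in> ?Q \<Longrightarrow> ?U p \<in> carrier G" for p
  proof -
    assume pQ: "p \<in> ?Q"
    obtain j i where pj: "p = (j,i)" by (cases p)
    then have p: "p = (j,i)" "j \<le> n" "i \<le> n" "(j,i) \<noteq> (n,0)" using pQ by auto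
    have n1: "n \<ge> 1" using p by (cases n) auto
    have "cmp C (degen Mf (n-1) j) (face Mf n i) \<in> Hom C (Mo n) (Mo n)"
      using cmp_closed[OF PA face_hom[OF DU n1 p(3)] degen_hom[OF DU, of j "n-1"]] p n1 by simp
    then show ?thesis unfolding Ut_def p cG G_def by (simp add: sgn_closed_H[OF PA])
  qed
  have Th: "p \<in> ?Q \<Longrightarrow> ?T (hh p) = \<ominus>\<^bsub>G\<^esub> ?U p" for p
  proof -
    assume pQ: "p \<in> ?Q"
    obtain j i where pj: "p = (j,i)" by (cases p)
    then have p: "p = (j,i)" "j \<le> n" "i \<le> n" "(j,i) \<noteq> (n,0)" using pQ by auto
    have n1: "n \<ge> 1" using p by (cases n) auto
    have Uc: "cmp C (degen Mf (n-1) j) (face Mf n i) \<in> carrier G"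
      using cmp_closed[OF PA face_hom[OF DU n1 p(3)] degen_hom[OF DU, of j "n-1"]] p n1 cG by simp
    show ?thesis
    proof (cases "i \<le> j")
      case True
      have "?T (hh p) = sgn_g G (Suc (j + i)) (Mf n n (eta n (Suc j) \<circ> eps (n+1) i))"
        unfolding Tt_def hh_def G_def using p True FD[OF DU, of i n "Suc j"] by (simp add: add.commute)
      also have "\<dots> = sgn_g G (Suc (j + i)) (cmp C (degen Mf (n-1) j) (face Mf n i))"
      proof -
        have "\<not> (i = 0 \<and> Suc j = n + 1)" using p by auto
        then have "eta n (Suc j) \<circ> eps (n+1) i = eps n i \<circ> eta (n-1) j"
          using comp_c[of n i "Suc j"] p True n1 by simp
        then show ?thesis using DF[OF DU n1, of i j] p by simp
      qed
      also have "\<dots> = \<ominus>\<^bsub>G\<^esub> ?U p" unfolding Ut_def p G_def[symmetric] using sgn_Suc Uc by simp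
      finally show ?thesis .
    next
      case False
      have "?T (hh p) = sgn_g G (Suc (j + i)) (Mf n n (eta n j \<circ> eps (n+1) (Suc i)))"
        unfolding Tt_def hh_def G_def using p False FD[OF DU, of "Suc i" n j] by (simp add: add.commute)
      also have "\<dots> = sgn_g G (Suc (j + i)) (cmp C (degen Mf (n-1) j) (face Mf n i))"
        using comp_d[of j "Suc i" n] DF[OF DU n1, of i j] p False n1 by simp
      also have "\<dots> = \<ominus>\<^bsub>G\<^esub> ?U p" unfolding Ut_def p G_def[symmetric] using sgn_Suc Uc by simp
      finally show ?thesis .
    qed
  qed
  let ?D1 = "(\<lambda>j. (Suc j, Suc j)) ` {..n}" and ?D2 = "(\<lambda>j. (Suc j, j)) ` {..n}" and ?H = "hh ` ?Q"
  let ?P = "{..n+1} \<times> {..n+1}"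
  have Pe: "?P = insert (0,0) (?D1 \<union> (?D2 \<union> insert (0, n+1) ?H))"
    unfolding D1_eq D2_eq H_eq by auto
  have TcX: "X \<subseteq> ?P \<Longrightarrow> ?T \<in> X \<rightarrow> carrier G" for X using Tc by auto
  have sD1: "?D1 \<subseteq> ?P" and sD2: "?D2 \<subseteq> ?P" and sH: "?H \<subseteq> ?P" and s0: "(0, n+1) \<in> ?P"
    using Pe by blast+
  have fin: "finite ?D1" "finite ?D2" "finite ?H" by auto
  have d1: "(0,0) \<notin> ?D1 \<union> (?D2 \<union> insert (0, n+1) ?H)" unfolding D1_eq D2_eq H_eq by auto
  have d2: "?D1 \<inter> (?D2 \<union> insert (0, n+1) ?H) = {}" unfolding D1_eq D2_eq H_eq by auto
  have d3: "?D2 \<inter> insert (0, n+1) ?H = {}" unfolding D1_eq D2_eq H_eq by auto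
  have d4: "(0, n+1) \<notin> ?H" unfolding H_eq by auto
  have S1: "finsum G ?T ?D1 = finsum G (\<lambda>j. idm C (Mo n)) {..n}"
  proof -
    have "finsum G ?T ?D1 = finsum G (\<lambda>j. ?T (Suc j, Suc j)) {..n}"
      using TcX[OF sD1] by (subst finsum_reindex) (auto simp: inj_on_def)
    also have "\<dots> = finsum G (\<lambda>j. idm C (Mo n)) {..n}"
      using T1 idc by (intro finsum_cong') auto
    finally show ?thesis .
  qed
  have S2: "finsum G ?T ?D2 = finsum G (\<lambda>j. \<ominus>\<^bsub>G\<^esub> idm C (Mo n)) {..n}"
  proof -
    have "finsum G ?T ?D2 = finsum G (\<lambda>j. ?T (Suc j, j)) {..n}"
      using TcX[OF sD2] by (subst finsum_reindex) (auto simp: inj_on_def)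
    also have "\<dots> = finsum G (\<lambda>j. \<ominus>\<^bsub>G\<^esub> idm C (Mo n)) {..n}"
      using T2 idc by (intro finsum_cong') auto
    finally show ?thesis .
  qed
  have S12: "finsum G ?T ?D1 \<oplus>\<^bsub>G\<^esub> finsum G ?T ?D2 = \<zero>\<^bsub>G\<^esub>"
  proof -
    have "finsum G ?T ?D1 \<oplus>\<^bsub>G\<^esub> finsum G ?T ?D2 = finsum G (\<lambda>j. idm C (Mo n) \<oplus>\<^bsub>G\<^esub> \<ominus>\<^bsub>G\<^esub> idm C (Mo n)) {..n}"
      unfolding S1 S2 using idc by (subst finsum_addf) auto
    also have "\<dots> = finsum G (\<lambda>j. \<zero>\<^bsub>G\<^esub>) {..n}"
      using idc by (intro finsum_cong') (auto simp: r_neg)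
    also have "\<dots> = \<zero>\<^bsub>G\<^esub>" by (rule finsum_zero)
    finally show ?thesis .
  qed
  have SH: "finsum G ?T ?H = \<ominus>\<^bsub>G\<^esub> finsum G ?U ?Q"
  proof -
    have "finsum G ?T ?H = finsum G (\<lambda>p. ?T (hh p)) ?Q"
      using TcX[OF sH] by (subst finsum_reindex) (auto simp: hh_inj)
    also have "\<dots> = finsum G (\<lambda>p. \<ominus>\<^bsub>G\<^esub> ?U p) ?Q"
      using Th Uc by (intro finsum_cong') auto
    also have "\<dots> = \<ominus>\<^bsub>G\<^esub> finsum G ?U ?Q"
      using Uc by (subst neg_finsum) auto
    finally show ?thesis .
  qed
  have c1: "finsum G ?T ?D1 \<in> carrier G" "finsum G ?T ?D2 \<in> carrier G" "finsum G ?T ?H \<in> carrier G"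
    using TcX[OF sD1] TcX[OF sD2] TcX[OF sH] by (auto intro: finsum_closed)
  have c2: "?T (0, n+1) \<in> carrier G" using Tc s0 by blast
  have cX: "finsum G ?T ?D2 \<in> carrier G" "finsum G ?T (insert (0, n+1) ?H) \<in> carrier G"
      "finsum G ?T (?D2 \<union> insert (0, n+1) ?H) \<in> carrier G"
    using TcX[of ?D2] TcX[of "insert (0, n+1) ?H"] TcX[of "?D2 \<union> insert (0, n+1) ?H"] sD2 sH s0
    by (auto intro!: finsum_closed)
  have e1: "finsum G ?T (?D1 \<union> (?D2 \<union> insert (0, n+1) ?H)) = finsum G ?T ?D1 \<oplus>\<^bsub>G\<^esub> finsum G ?T (?D2 \<union> insert (0, n+1) ?H)"
    using fin d2 TcX[OF sD1] TcX[of "?D2 \<union> insert (0, n+1) ?H"] sD2 sH s0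
    by (intro finsum_Un_disjoint) auto
  have e2: "finsum G ?T (?D2 \<union> insert (0, n+1) ?H) = finsum G ?T ?D2 \<oplus>\<^bsub>G\<^esub> finsum G ?T (insert (0, n+1) ?H)"
    using fin d3 TcX[OF sD2] TcX[of "insert (0, n+1) ?H"] sH s0
    by (intro finsum_Un_disjoint) auto
  have e3: "finsum G ?T (insert (0, n+1) ?H) = ?T (0, n+1) \<oplus>\<^bsub>G\<^esub> finsum G ?T ?H"
    using fin d4 TcX[OF sH] c2
    by (intro finsum_insert) auto
  have "finsum G ?T ?P = finsum G ?T (insert (0,0) (?D1 \<union> (?D2 \<union> insert (0, n+1) ?H)))"
    by (simp only: Pe)
  also have "\<dots> = ?T (0,0) \<oplus>\<^bsub>G\<^esub> finsum G ?T (?D1 \<union> (?D2 \<union> insert (0, n+1) ?H))"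
    using fin d1 Tc[of "(0,0)"] TcX[of "?D1 \<union> (?D2 \<union> insert (0, n+1) ?H)"] sD1 sD2 sH s0
    by (intro finsum_insert) auto
  also have "\<dots> = ?T (0,0) \<oplus>\<^bsub>G\<^esub> (finsum G ?T ?D1 \<oplus>\<^bsub>G\<^esub> (finsum G ?T ?D2 \<oplus>\<^bsub>G\<^esub> (?T (0, n+1) \<oplus>\<^bsub>G\<^esub> finsum G ?T ?H)))"
    by (simp only: e1 e2 e3)
  also have "\<dots> = ?T (0,0) \<oplus>\<^bsub>G\<^esub> ((finsum G ?T ?D1 \<oplus>\<^bsub>G\<^esub> finsum G ?T ?D2) \<oplus>\<^bsub>G\<^esub> (?T (0, n+1) \<oplus>\<^bsub>G\<^esub> finsum G ?T ?H))"
    using c1 c2 by (simp add: a_assoc)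
  also have "\<dots> = idm C (Mo n) \<oplus>\<^bsub>G\<^esub> (?T (0, n+1) \<oplus>\<^bsub>G\<^esub> \<ominus>\<^bsub>G\<^esub> finsum G ?U ?Q)"
    unfolding S12 SH T0 using c1 c2 SH by simp
  finally show ?thesis using bd by simp
qed


lemma Ut_closed:
  assumes PA: "preadditive C" and DU: "duplicial C Mo Mf" and n1: "n \<ge> 1" and p: "p \<in> {..n} \<times> {..n}"
  shows "Ut C Mo Mf n p \<in> Hom C (Mo n) (Mo n)"
proof -
  obtain j i where pj: "p = (j,i)" "j \<le> n" "i \<le> n" using p by auto
  have "cmp C (degen Mf (n-1) j) (face Mf n i) \<in> Hom C (Mo n) (Mo n)"
    using cmp_closed[OF PA face_hom[OF DU n1 pj(3)] degen_hom[OF DU, of j "n-1"]] pj n1 by simp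
  then show ?thesis unfolding Ut_def pj by (simp add: sgn_closed_H[OF PA])
qed

lemma db_decomp:
  fixes n :: nat
  assumes PA: "preadditive C" and DU: "duplicial C Mo Mf" and n1: "n \<ge> 1"
  defines "G \<equiv> HG C (Mo n) (Mo n)"
  shows "cmp C (dop C Mf (n - 1)) (bop C Mf n)
     = Ut C Mo Mf n (n, 0) \<oplus>\<^bsub>G\<^esub> finsum G (Ut C Mo Mf n) ({..n} \<times> {..n} - {(n,0)})"
proof -
  interpret abelian_group G unfolding G_def by (rule HG_ag[OF PA])
  have cG: "carrier G = Hom C (Mo n) (Mo n)" by (simp add: G_def)
  have fh: "i \<le> n \<Longrightarrow> face Mf n i \<in> Hom C (Mo n) (Mo (n-1))" for i
    using face_hom[OF DU n1] by simp
  have dh: "j \<le> n \<Longrightarrow> degen Mf (n-1) j \<in> Hom C (Mo (n-1)) (Mo n)" for j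
    using degen_hom[OF DU, of j "n-1"] n1 by simp
  have nn: "n - 1 + 1 = n" using n1 by simp
  have db: "cmp C (dop C Mf (n - 1)) (bop C Mf n) = finsum G (Ut C Mo Mf n) ({..n} \<times> {..n})"
    unfolding bop_def dop_def Ut_def G_def nn
    by (rule cmp_altsum2[OF PA]) (use fh dh in simp_all)
  have Uc: "p \<in> {..n} \<times> {..n} \<Longrightarrow> Ut C Mo Mf n p \<in> carrier G" for p
    using Ut_closed[OF PA DU n1] cG by simp
  have e: "{..n} \<times> {..n} = insert (n,0) ({..n} \<times> {..n} - {(n,0)})" by auto
  show ?thesis unfolding db
    by (subst e, rule finsum_insert) (use Uc in auto)
qed

theorem mainTheorem8:
  fixes C :: "('o,'m) preadd_cat"
    and Mo :: "nat \<Rightarrow> 'o"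
    and Mf :: "nat \<Rightarrow> nat \<Rightarrow> (int \<Rightarrow> int) \<Rightarrow> 'm"
    and n :: nat
  assumes "preadditive C"
    and "duplicial C Mo Mf"
  shows "kappa C Mf n =
    add C (idm C (Mo n))
      (neg C (add C (cmp C (bop C Mf (n + 1)) (dop C Mf n))
                    (if n = 0 then zer C (Mo 0) (Mo 0)
                     else cmp C (dop C Mf (n - 1)) (bop C Mf n))))"
proof -
  note PA = assms(1) and DU = assms(2)
  define G where "G = HG C (Mo n) (Mo n)"
  interpret abelian_group G unfolding G_def by (rule HG_ag[OF PA])
  have cG: "carrier G = Hom C (Mo n) (Mo n)" by (simp add: G_def)
  have addG: "add C x y = x \<oplus>\<^bsub>G\<^esub> y" for x y by (simp add: G_def)
  have negG: "x \<in> carrier G \<Longrightarrow> neg C x = \<ominus>\<^bsub>G\<^esub> x" for x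
    unfolding G_def cG by (simp add: HG_inv[OF PA])
  have zG: "zer C (Mo n) (Mo n) = \<zero>\<^bsub>G\<^esub>" by (simp add: G_def)
  have idc: "idm C (Mo n) \<in> carrier G" using idm_closed[OF PA] cG by simp
  let ?S = "finsum G (Ut C Mo Mf n) ({..n} \<times> {..n} - {(n,0)})"
  define K1 where "K1 = cmp C (face Mf (n+1) 0) (degen Mf n (n+1))"
  have K1c: "K1 \<in> carrier G" unfolding K1_def cG
    using cmp_closed[OF PA degen_hom[OF DU, of "n+1" n] face_hom[OF DU, of "n+1" 0]] by simp
  have T0: "Tt C Mo Mf n (0, n+1) = \<ominus>\<^bsub>G\<^esub> sgn_g G n K1"
  proof -
    have "Tt C Mo Mf n (0, n+1) = sgn_g G (Suc n) K1" unfolding Tt_def K1_def G_def by simp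
    then show ?thesis using sgn_Suc K1c by simp
  qed
  have bd: "cmp C (bop C Mf (n + 1)) (dop C Mf n) = idm C (Mo n) \<oplus>\<^bsub>G\<^esub> (\<ominus>\<^bsub>G\<^esub> sgn_g G n K1 \<oplus>\<^bsub>G\<^esub> \<ominus>\<^bsub>G\<^esub> ?S)"
    using bd_decomp[OF PA DU, of n] T0 unfolding G_def by simp
  show ?thesis
  proof (cases "n = 0")
    case True
    have S0: "?S = \<zero>\<^bsub>G\<^esub>" using True by simp
    have k: "kappa C Mf n = K1" unfolding kappa_def K1_def using True by simp
    have "add C (idm C (Mo n)) (neg C (add C (cmp C (bop C Mf (n + 1)) (dop C Mf n)) (zer C (Mo n) (Mo n))))
       = idm C (Mo n) \<oplus>\<^bsub>G\<^esub> \<ominus>\<^bsub>G\<^esub> ((idm C (Mo n) \<oplus>\<^bsub>G\<^esub> (\<ominus>\<^bsub>G\<^esub> K1 \<oplus>\<^bsub>G\<^esub> \<ominus>\<^bsub>G\<^esub> \<zero>\<^bsub>G\<^esub>)) \<oplus>\<^bsub>G\<^esub> \<zero>\<^bsub>G\<^esub>)"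
      unfolding bd S0 addG zG using True idc K1c by (subst negG) (auto simp: sgn_g_def)
    also have "\<dots> = K1" using grp3 idc K1c by simp
    finally show ?thesis using True k by simp
  next
    case False
    then have n1: "n \<ge> 1" by simp
    define K2 where "K2 = cmp C (degen Mf (n-1) n) (face Mf n 0)"
    have K2c: "K2 \<in> carrier G" unfolding K2_def cG
      using cmp_closed[OF PA face_hom[OF DU n1, of 0] degen_hom[OF DU, of n "n-1"]] n1 by simp
    have U0: "Ut C Mo Mf n (n, 0) = sgn_g G n K2"
      unfolding Ut_def K2_def G_def by simp
    have db: "cmp C (dop C Mf (n - 1)) (bop C Mf n) = sgn_g G n K2 \<oplus>\<^bsub>G\<^esub> ?S"
      using db_decomp[OF PA DU n1] U0 unfolding G_def by simp
    have "?S \<in> Hom C (Mo n) (Mo n)" unfolding G_def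
      by (rule finsum_closed_H[OF PA]) (use Ut_closed[OF PA DU n1] in auto)
    then have Sc: "?S \<in> carrier G" using cG by simp
    have k: "kappa C Mf n = sgn_g G n (K1 \<oplus>\<^bsub>G\<^esub> \<ominus>\<^bsub>G\<^esub> K2)"
      unfolding kappa_def K1_def K2_def sgn_g_def Let_def using False K1c K2c
      by (simp add: addG negG K1_def K2_def)
    have "add C (idm C (Mo n)) (neg C (add C (cmp C (bop C Mf (n + 1)) (dop C Mf n)) (cmp C (dop C Mf (n - 1)) (bop C Mf n))))
       = idm C (Mo n) \<oplus>\<^bsub>G\<^esub> \<ominus>\<^bsub>G\<^esub> ((idm C (Mo n) \<oplus>\<^bsub>G\<^esub> (\<ominus>\<^bsub>G\<^esub> sgn_g G n K1 \<oplus>\<^bsub>G\<^esub> \<ominus>\<^bsub>G\<^esub> ?S)) \<oplus>\<^bsub>G\<^esub> (sgn_g G n K2 \<oplus>\<^bsub>G\<^esub> ?S))"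
      unfolding bd db addG using idc K1c K2c Sc by (subst negG) (simp_all add: sgn_closed)
    also have "\<dots> = sgn_g G n K1 \<oplus>\<^bsub>G\<^esub> \<ominus>\<^bsub>G\<^esub> sgn_g G n K2"
      using grp2 idc K1c K2c Sc sgn_closed by simp
    also have "\<dots> = kappa C Mf n" unfolding k sgn_g_def using sgn_sub[OF K1c K2c, of n] by simp
    finally show ?thesis using False by simp
  qed
qed

end
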